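(* For every graph $G$, $\operatorname{box}(G)\le MFVC(G)+3$.
   Context: A feedback vertex cover of $G=(V,E)$ is a set $S\subseteq V$ such that the subgraph induced on $V\setminus S$ is a forest; $MFVC(G)$ is the minimum cardinality of a feedback vertex cover. The boxicity $\operatorname{box}(G)$ is the minimum $b$ such that $G$ is the intersection graph of axis-parallel boxes in $\mathbb{R}^b$ (products of $b$ closed intervals), one box per vertex. *)

theory Defs
  imports Complex_Main
begin

definition graph :: "'a set \<Rightarrow> ('a \<times> 'a) set \<Rightarrow> bool" where
  "graph V E \<longleftrightarrow> finite V \<and> E \<subseteq> V \<times> V \<and> sym E \<and> irrefl E"

definition is_cycle :: "'a set \<Rightarrow> ('a \<times> 'a) set \<Rightarrow> 'a list \<Rightarrow> bool" where
  "is_cycle V E cs \<longleftrightarrow> length cs \<ge> 3 \<and> distinct cs \<and> set cs \<subseteq> V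
     \<and> (\<forall>i < length cs. (cs ! i, cs ! ((i + 1) mod length cs)) \<in> E)"

definition forest :: "'a set \<Rightarrow> ('a \<times> 'a) set \<Rightarrow> bool" where
  "forest V E \<longleftrightarrow> \<not> (\<exists>cs. is_cycle V E cs)"

definition induced_edges :: "('a \<times> 'a) set \<Rightarrow> 'a set \<Rightarrow> ('a \<times> 'a) set" where
  "induced_edges E W = E \<inter> (W \<times> W)"

definition feedback_vertex_cover :: "'a set \<Rightarrow> ('a \<times> 'a) set \<Rightarrow> 'a set \<Rightarrow> bool" where
  "feedback_vertex_cover V E S \<longleftrightarrow>
     S \<subseteq> V \<and> forest (V - S) (induced_edges E (V - S))"

definition MFVC :: "'a set \<Rightarrow> ('a \<times> 'a) set \<Rightarrow> nat" where
  "MFVC V E = (LEAST k. \<exists>S. feedback_vertex_cover V E S \<and> card S = k)"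

definition box_of :: "nat \<Rightarrow> ('a \<Rightarrow> nat \<Rightarrow> real \<times> real) \<Rightarrow> 'a \<Rightarrow> (nat \<Rightarrow> real) set" where
  "box_of b B v = {x. (\<forall>i < b. fst (B v i) \<le> x i \<and> x i \<le> snd (B v i)) \<and> (\<forall>i \<ge> b. x i = 0)}"

definition box_representation ::
  "'a set \<Rightarrow> ('a \<times> 'a) set \<Rightarrow> nat \<Rightarrow> ('a \<Rightarrow> nat \<Rightarrow> real \<times> real) \<Rightarrow> bool" where
  "box_representation V E b B \<longleftrightarrow>
     (\<forall>v \<in> V. \<forall>i < b. fst (B v i) \<le> snd (B v i)) \<and>
     (\<forall>u \<in> V. \<forall>v \<in> V. u \<noteq> v \<longrightarrow> ((u, v) \<in> E \<longleftrightarrow> box_of b B u \<inter> box_of b B v \<noteq> {}))"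

definition boxicity :: "'a set \<Rightarrow> ('a \<times> 'a) set \<Rightarrow> nat" where
  "boxicity V E = (LEAST b. \<exists>B. box_representation V E b B)"

end

theory Submission
  imports Defs
begin

definition ov :: "nat \<Rightarrow> ('a \<Rightarrow> nat \<Rightarrow> real \<times> real) \<Rightarrow> 'a \<Rightarrow> 'a \<Rightarrow> bool" where
  "ov b B u w \<longleftrightarrow> (\<forall>i<b. fst (B u i) \<le> snd (B w i) \<and> fst (B w i) \<le> snd (B u i))"

lemma box_inter_iff:
  assumes "\<forall>i<b. fst (B u i) \<le> snd (B u i)" "\<forall>i<b. fst (B v i) \<le> snd (B v i)"
  shows "box_of b B u \<inter> box_of b B v \<noteq> {} \<longleftrightarrow> ov b B u v"
proof
  assume "box_of b B u \<inter> box_of b B v \<noteq> {}"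
  then obtain x where "x \<in> box_of b B u" "x \<in> box_of b B v" by blast
  then show "ov b B u v" unfolding box_of_def ov_def by force
next
  assume h: "ov b B u v"
  define x where "x = (\<lambda>i. if i < b then max (fst (B u i)) (fst (B v i)) else 0)"
  have "x \<in> box_of b B u" "x \<in> box_of b B v"
    using h assms unfolding box_of_def ov_def x_def by auto
  then show "box_of b B u \<inter> box_of b B v \<noteq> {}" by blast
qed

lemma rep_iff:
  "box_representation W E b B \<longleftrightarrow>
     (\<forall>v \<in> W. \<forall>i < b. fst (B v i) \<le> snd (B v i)) \<and>
     (\<forall>u \<in> W. \<forall>v \<in> W. u \<noteq> v \<longrightarrow> ((u, v) \<in> E \<longleftrightarrow> ov b B u v))"
proof (cases "\<forall>v \<in> W. \<forall>i < b. fst (B v i) \<le> snd (B v i)")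
  case True
  then have "\<And>u v. u \<in> W \<Longrightarrow> v \<in> W \<Longrightarrow> (box_of b B u \<inter> box_of b B v \<noteq> {}) = ov b B u v"
    by (simp add: box_inter_iff)
  then show ?thesis using True unfolding box_representation_def by auto
next
  case False
  then show ?thesis unfolding box_representation_def by auto
qed

lemma add_vertex:
  assumes rep: "box_representation (W - {v}) E b B" and sym: "sym E" and fin: "finite W"
  shows "\<exists>B'. box_representation W E (Suc b) B'"
proof -
  define lo where "lo i = Min (insert 0 ((\<lambda>w. fst (B w i)) ` (W - {v})))" for i
  define hi where "hi i = Max (insert 0 ((\<lambda>w. snd (B w i)) ` (W - {v})))" for i
  have lo: "lo i \<le> fst (B w i)" if "w \<in> W - {v}" for w i
    unfolding lo_def using fin that by (intro Min_le) auto
  have hi: "snd (B w i) \<le> hi i" if "w \<in> W - {v}" for w i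
    unfolding hi_def using fin that by (intro Max_ge) auto
  have lohi: "lo i \<le> hi i" for i
  proof -
    have "lo i \<le> 0" unfolding lo_def using fin by (intro Min_le) auto
    moreover have "0 \<le> hi i" unfolding hi_def using fin by (intro Max_ge) auto
    ultimately show ?thesis by simp
  qed
  define B' where "B' w i = (if w = v then (if i < b then (lo i, hi i) else (0,0))
          else if i < b then B w i else (if (w,v) \<in> E then (0,1) else (1,1)))" for w i
  have valid: "\<forall>w\<in>W-{v}. \<forall>i<b. fst (B w i) \<le> snd (B w i)"
   and old: "\<forall>u\<in>W-{v}. \<forall>w\<in>W-{v}. u \<noteq> w \<longrightarrow> ((u, w) \<in> E \<longleftrightarrow> ov b B u w)"
    using rep unfolding rep_iff by auto
  have B'v: "B' v i = (if i < b then (lo i, hi i) else (0,0))" for i unfolding B'_def by simp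
  have B'w: "B' w i = (if i < b then B w i else (if (w,v) \<in> E then (0,1) else (1,1)))"
    if "w \<noteq> v" for w i unfolding B'_def using that by simp
  have ovS: "ov (Suc b) B' u w \<longleftrightarrow> ov b B' u w \<and> fst (B' u b) \<le> snd (B' w b) \<and> fst (B' w b) \<le> snd (B' u b)" for u w
    unfolding ov_def by (auto simp: less_Suc_eq)
  have ovv: "ov b B' v w" "ov b B' w v" if "w \<in> W" "w \<noteq> v" for w
  proof -
    have "lo i \<le> snd (B w i) \<and> fst (B w i) \<le> hi i" if "i < b" for i
      using lo[of w i] hi[of w i] valid \<open>w \<in> W\<close> \<open>w \<noteq> v\<close> that by force
    then show "ov b B' v w" "ov b B' w v" unfolding ov_def using B'v B'w[OF \<open>w \<noteq> v\<close>] by auto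
  qed
  have "box_representation W E (Suc b) B'"
    unfolding rep_iff
  proof (intro conjI ballI allI impI)
    fix w i assume "w \<in> W" "i < Suc b"
    then show "fst (B' w i) \<le> snd (B' w i)"
      using valid lohi B'v B'w by (cases "w = v") auto
  next
    fix u w assume uw: "u \<in> W" "w \<in> W" "u \<noteq> w"
    show "(u, w) \<in> E \<longleftrightarrow> ov (Suc b) B' u w"
    proof (cases "u = v")
      case True
      then have "w \<noteq> v" using uw by auto
      have "(u,w) \<in> E \<longleftrightarrow> (w,v) \<in> E" using sym True unfolding sym_def by auto
      then show ?thesis unfolding ovS using True \<open>w \<noteq> v\<close> ovv uw B'v B'w by auto
    next
      case False
      show ?thesis
      proof (cases "w = v")
        case True
        then show ?thesis unfolding ovS using True \<open>u \<noteq> v\<close> ovv uw B'v B'w by auto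
      next
        case False
        have "ov b B' u w = ov b B u w" unfolding ov_def using B'w False \<open>u \<noteq> v\<close> by auto
        moreover have "fst (B' u b) \<le> snd (B' w b) \<and> fst (B' w b) \<le> snd (B' u b)"
          using B'w False \<open>u \<noteq> v\<close> by auto
        ultimately show ?thesis unfolding ovS using old uw False \<open>u \<noteq> v\<close> by auto
      qed
    qed
  qed
  then show ?thesis by blast
qed

lemma add_set:
  assumes "finite S" "sym E"
  shows "finite W \<Longrightarrow> S \<subseteq> W \<Longrightarrow> box_representation (W - S) E b B \<Longrightarrow> \<exists>B'. box_representation W E (b + card S) B'"
  using assms(1)
proof (induction S arbitrary: W)
  case empty
  then show ?case by auto
next
  case (insert x S)
  have eq: "W - {x} - S = W - insert x S" by auto
  have sub: "S \<subseteq> W - {x}" using insert.prems insert.hyps by auto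
  have fin: "finite (W - {x})" using insert.prems by auto
  obtain B1 where B1: "box_representation (W - {x}) E (b + card S) B1"
    using insert.IH[OF fin sub] insert.prems(3) unfolding eq by blast
  obtain B2 where "box_representation W E (Suc (b + card S)) B2"
    using add_vertex[OF B1 assms(2) insert.prems(1)] by blast
  then show ?case using insert.hyps by auto
qed

definition gpath :: "('a \<times> 'a) set \<Rightarrow> 'a set \<Rightarrow> 'a list \<Rightarrow> bool" where
  "gpath E W ps \<longleftrightarrow> ps \<noteq> [] \<and> distinct ps \<and> set ps \<subseteq> W \<and> (\<forall>i. Suc i < length ps \<longrightarrow> (ps ! i, ps ! Suc i) \<in> E)"

lemma gpath_cons:
  assumes "gpath E W ps" "c \<in> W" "c \<notin> set ps" "(c, hd ps) \<in> E"
  shows "gpath E W (c # ps)"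
  unfolding gpath_def
proof (intro conjI allI impI)
  fix i assume i: "Suc i < length (c # ps)"
  show "((c # ps) ! i, (c # ps) ! Suc i) \<in> E"
  proof (cases i)
    case 0
    then show ?thesis using assms(1,4) by (cases ps) (auto simp: gpath_def)
  next
    case (Suc k)
    then show ?thesis using assms(1) i unfolding gpath_def by auto
  qed
qed (use assms in \<open>auto simp: gpath_def\<close>)

lemma leaf_exists:
  assumes fin: "finite W" and ne: "W \<noteq> {}" and sym: "sym E" and irr: "irrefl E"
    and nocyc: "\<not> (\<exists>cs. is_cycle W E cs)"
  shows "\<exists>v\<in>W. \<forall>a\<in>W. \<forall>b\<in>W. (v, a) \<in> E \<longrightarrow> (v, b) \<in> E \<longrightarrow> a = b"
proof (rule ccontr)
  assume "\<not> ?thesis"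
  then have deg2: "\<forall>v\<in>W. \<exists>a\<in>W. \<exists>b\<in>W. (v, a) \<in> E \<and> (v, b) \<in> E \<and> a \<noteq> b" by blast
  obtain w0 where w0: "w0 \<in> W" using ne by blast
  have p0: "gpath E W [w0]" using w0 unfolding gpath_def by auto
  have bnd: "\<forall>ps. gpath E W ps \<longrightarrow> length ps < Suc (card W)"
  proof (intro allI impI)
    fix ps assume "gpath E W ps"
    then have "length ps = card (set ps)" "card (set ps) \<le> card W"
      using fin card_mono[of W "set ps"] distinct_card[of ps] by (auto simp: gpath_def)
    then show "length ps < Suc (card W)" by simp
  qed
  obtain ps where ps: "gpath E W ps" and maxp: "\<forall>qs. gpath E W qs \<longrightarrow> length qs \<le> length ps"
    using ex_has_greatest_nat[of "gpath E W" "[w0]" length "Suc (card W)"] p0 bnd by blast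
  obtain v rest where psv: "ps = v # rest" using ps unfolding gpath_def by (cases ps) auto
  have vW: "v \<in> W" using ps psv unfolding gpath_def by auto
  obtain a b where ab: "a \<in> W" "b \<in> W" "(v, a) \<in> E" "(v, b) \<in> E" "a \<noteq> b" using deg2 vW by blast
  have inps: "c \<in> set ps" if "c \<in> W" "(v, c) \<in> E" for c
  proof (rule ccontr)
    assume "c \<notin> set ps"
    moreover have "(c, hd ps) \<in> E" using that sym psv unfolding sym_def by auto
    ultimately have "gpath E W (c # ps)" using gpath_cons ps that by metis
    then show False using maxp by fastforce
  qed
  obtain c where c: "c \<in> W" "(v, c) \<in> E" "length ps < 2 \<or> c \<noteq> ps ! 1"
    using ab by blast
  have cv: "c \<noteq> v" using c irr unfolding irrefl_def by auto
  obtain j where j: "j < length ps" "ps ! j = c" using inps[OF c(1,2)] by (metis in_set_conv_nth)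
  have j2: "2 \<le> j"
  proof -
    have "j \<noteq> 0" using j cv psv by (metis nth_Cons_0)
    moreover have "j \<noteq> 1" using j c(3) by auto
    ultimately show ?thesis by simp
  qed
  define cs where "cs = take (Suc j) ps"
  have lcs: "length cs = Suc j" using j unfolding cs_def by simp
  have "is_cycle W E cs"
    unfolding is_cycle_def
  proof (intro conjI allI impI)
    show "3 \<le> length cs" using lcs j2 by simp
    show "distinct cs" using ps unfolding cs_def gpath_def by simp
    show "set cs \<subseteq> W" using ps unfolding cs_def gpath_def by (meson order.trans set_take_subset)
  next
    fix i assume i: "i < length cs"
    show "(cs ! i, cs ! ((i + 1) mod length cs)) \<in> E"
    proof (cases "i < j")
      case True
      then have "(i + 1) mod length cs = Suc i" using lcs by simp
      then show ?thesis using True ps j unfolding cs_def gpath_def by simp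
    next
      case False
      then have "i = j" using i lcs by simp
      then have "(i + 1) mod length cs = 0" using lcs by simp
      moreover have "(c, v) \<in> E" using c sym unfolding sym_def by auto
      moreover have "cs ! j = c" using j unfolding cs_def by (simp add: nth_take)
      moreover have "cs ! 0 = v" using psv unfolding cs_def by simp
      ultimately show ?thesis using \<open>i = j\<close> by simp
    qed
  qed
  then show False using nocyc by blast
qed

definition finv :: "'a set \<Rightarrow> ('a \<times> 'a) set \<Rightarrow> ('a \<Rightarrow> real) \<Rightarrow> ('a \<Rightarrow> real) \<Rightarrow> ('a \<Rightarrow> real)
   \<Rightarrow> ('a \<Rightarrow> real) \<Rightarrow> ('a \<Rightarrow> real) \<Rightarrow> ('a \<Rightarrow> real) \<Rightarrow> bool" where
  "finv W E xl xh yl yh fl fh \<longleftrightarrow>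
    (\<forall>u\<in>W. xl u \<le> xh u \<and> yl u \<le> yh u \<and> fl u < fh u \<and> yl u \<le> fl u \<and> fh u \<le> yh u) \<and>
    (\<forall>a\<in>W. \<forall>b\<in>W. a \<noteq> b \<longrightarrow> ((a, b) \<in> E \<longleftrightarrow> (xl a \<le> xh b \<and> xl b \<le> xh a \<and> yl a \<le> yh b \<and> yl b \<le> yh a))) \<and>
    (\<forall>a\<in>W. \<forall>b\<in>W. a \<noteq> b \<longrightarrow> \<not> (xh a \<le> xh b \<and> yl b \<le> fh a \<and> fl a \<le> yh b)) \<and>
    (\<forall>a\<in>W. \<forall>b\<in>W. a \<noteq> b \<longrightarrow> fh a < fl b \<or> fh b < fl a)"

lemma finv_leaf:
  assumes inv: "finv W E xl xh yl yh fl fh" and v: "v \<notin> W" and u: "u \<in> W" "(v, u) \<in> E"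
    and uniq: "\<forall>w\<in>W. (v, w) \<in> E \<longrightarrow> w = u" and sym: "sym E"
  shows "\<exists>xl xh yl yh fl fh. finv (insert v W) E xl xh yl yh fl fh"
proof -
  have I1: "xl a \<le> xh a \<and> yl a \<le> yh a \<and> fl a < fh a \<and> yl a \<le> fl a \<and> fh a \<le> yh a" if "a \<in> W" for a
    using inv that unfolding finv_def by blast
  have I2: "(a, b) \<in> E \<longleftrightarrow> (xl a \<le> xh b \<and> xl b \<le> xh a \<and> yl a \<le> yh b \<and> yl b \<le> yh a)"
    if "a \<in> W" "b \<in> W" "a \<noteq> b" for a b
    using inv that unfolding finv_def by blast
  have I3: "\<not> (xh a \<le> xh b \<and> yl b \<le> fh a \<and> fl a \<le> yh b)" if "a \<in> W" "b \<in> W" "a \<noteq> b" for a b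
    using inv that unfolding finv_def by blast
  have I4: "fh a < fl b \<or> fh b < fl a" if "a \<in> W" "b \<in> W" "a \<noteq> b" for a b
    using inv that unfolding finv_def by blast
  have uv: "u \<noteq> v" using u v by auto
  define m1 where "m1 = fl u + (fh u - fl u) / 3"
  define m2 where "m2 = fl u + 2 * (fh u - fl u) / 3"
  have m: "fl u < m1" "m1 < m2" "m2 < fh u" using I1[OF u(1)] unfolding m1_def m2_def by (auto simp: field_simps)
  define xl' where "xl' = xl(v := xh u)"
  define xh' where "xh' = xh(v := xh u + 1)"
  define yl' where "yl' = yl(v := fl u)"
  define yh' where "yh' = yh(v := m1)"
  define fl' where "fl' = fl(v := fl u, u := m2)"
  define fh' where "fh' = fh(v := m1)"
  have new_v: "xl' v = xh u" "xh' v = xh u + 1" "yl' v = fl u" "yh' v = m1" "fl' v = fl u" "fh' v = m1"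
    unfolding xl'_def xh'_def yl'_def yh'_def fl'_def fh'_def using uv by auto
  have new_u: "xl' u = xl u" "xh' u = xh u" "yl' u = yl u" "yh' u = yh u" "fl' u = m2" "fh' u = fh u"
    unfolding xl'_def xh'_def yl'_def yh'_def fl'_def fh'_def using uv by auto
  have new_w: "xl' w = xl w" "xh' w = xh w" "yl' w = yl w" "yh' w = yh w" "fl' w = fl w" "fh' w = fh w"
    if "w \<noteq> v" "w \<noteq> u" for w
    unfolding xl'_def xh'_def yl'_def yh'_def fl'_def fh'_def using that by auto
  have U1: "xl' u \<le> xh' u \<and> yl' u \<le> yh' u \<and> fl' u < fh' u \<and> yl' u \<le> fl' u \<and> fh' u \<le> yh' u"
    using I1[OF u(1)] m new_u by auto
  have V1: "xl' v \<le> xh' v \<and> yl' v \<le> yh' v \<and> fl' v < fh' v \<and> yl' v \<le> fl' v \<and> fh' v \<le> yh' v"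
    using m new_v by auto
  have C1: "\<forall>a\<in>insert v W. xl' a \<le> xh' a \<and> yl' a \<le> yh' a \<and> fl' a < fh' a \<and> yl' a \<le> fl' a \<and> fh' a \<le> yh' a"
  proof
    fix a assume a: "a \<in> insert v W"
    consider "a = v" | "a = u" | "a \<in> W" "a \<noteq> u" "a \<noteq> v" using a by auto
    then show "xl' a \<le> xh' a \<and> yl' a \<le> yh' a \<and> fl' a < fh' a \<and> yl' a \<le> fl' a \<and> fh' a \<le> yh' a"
    proof cases
      case 1 then show ?thesis using V1 by simp
    next
      case 2 then show ?thesis using U1 by simp
    next
      case 3 then show ?thesis using I1[of a] new_w[of a] by auto
    qed
  qed
  have C234: "((a, b) \<in> E \<longleftrightarrow> (xl' a \<le> xh' b \<and> xl' b \<le> xh' a \<and> yl' a \<le> yh' b \<and> yl' b \<le> yh' a))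
     \<and> \<not> (xh' a \<le> xh' b \<and> yl' b \<le> fh' a \<and> fl' a \<le> yh' b) \<and> (fh' a < fl' b \<or> fh' b < fl' a)"
    if a: "a \<in> insert v W" and b: "b \<in> insert v W" and ab: "a \<noteq> b" for a b
  proof -
    consider "a = v" "b = u" | "a = u" "b = v" | "a = v" "b \<in> W" "b \<noteq> u" "b \<noteq> v"
      | "b = v" "a \<in> W" "a \<noteq> u" "a \<noteq> v" | "a = u" "b \<in> W" "b \<noteq> u" "b \<noteq> v"
      | "b = u" "a \<in> W" "a \<noteq> u" "a \<noteq> v" | "a \<in> W" "b \<in> W" "a \<noteq> u" "a \<noteq> v" "b \<noteq> u" "b \<noteq> v"
      using a b ab by blast
    note cases = this
    have symE: "(x, y) \<in> E \<longleftrightarrow> (y, x) \<in> E" for x y using sym unfolding sym_def by blast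
    have nE: "(v, w) \<notin> E" "(w, v) \<notin> E" if "w \<in> W" "w \<noteq> u" for w
      using uniq that symE by blast+
    have P1: "(a, b) \<in> E \<longleftrightarrow> (xl' a \<le> xh' b \<and> xl' b \<le> xh' a \<and> yl' a \<le> yh' b \<and> yl' b \<le> yh' a)"
      using cases
    proof cases
      case 1 then show ?thesis using u(2) I1[OF u(1)] m new_u new_v by auto
    next
      case 2 then show ?thesis using u(2) symE I1[OF u(1)] m new_u new_v by auto
    next
      case 3 then show ?thesis using nE[of b] I3[OF u(1), of b] m new_v new_w[of b] by auto
    next
      case 4 then show ?thesis using nE[of a] I3[OF u(1), of a] m new_v new_w[of a] by auto
    next
      case 5 then show ?thesis using I2[OF u(1), of b] new_u new_w[of b] by auto
    next
      case 6 then show ?thesis using I2[OF _ u(1), of a] new_u new_w[of a] by auto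
    next
      case 7 then show ?thesis using ab I2[of a b] new_w[of a] new_w[of b] by auto
    qed
    have P2: "\<not> (xh' a \<le> xh' b \<and> yl' b \<le> fh' a \<and> fl' a \<le> yh' b)"
      using cases
    proof cases
      case 1 then show ?thesis using new_u new_v by auto
    next
      case 2 then show ?thesis using m new_u new_v by auto
    next
      case 3 then show ?thesis using I3[OF u(1), of b] m new_v new_w[of b] by auto
    next
      case 4 then show ?thesis using I4[OF u(1), of a] m new_v new_w[of a] by auto
    next
      case 5 then show ?thesis using I3[OF u(1), of b] m new_u new_w[of b] by auto
    next
      case 6 then show ?thesis using I3[OF _ u(1), of a] new_u new_w[of a] by auto
    next
      case 7 then show ?thesis using ab I3[of a b] new_w[of a] new_w[of b] by auto
    qed
    have P3: "fh' a < fl' b \<or> fh' b < fl' a"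
      using cases
    proof cases
      case 1 then show ?thesis using m new_u new_v by auto
    next
      case 2 then show ?thesis using m new_u new_v by auto
    next
      case 3 then show ?thesis using I4[OF u(1), of b] m new_v new_w[of b] by auto
    next
      case 4 then show ?thesis using I4[OF u(1), of a] m new_v new_w[of a] by auto
    next
      case 5 then show ?thesis using I4[OF u(1), of b] m new_u new_w[of b] by auto
    next
      case 6 then show ?thesis using I4[OF u(1), of a] m new_u new_w[of a] by auto
    next
      case 7 then show ?thesis using ab I4[of a b] new_w[of a] new_w[of b] by auto
    qed
    show ?thesis using P1 P2 P3 by blast
  qed
  have "finv (insert v W) E xl' xh' yl' yh' fl' fh'"
    unfolding finv_def using C1 C234 by blast
  then show ?thesis by blast
qed

lemma finv_iso:
  assumes inv: "finv W E xl xh yl yh fl fh" and v: "v \<notin> W" and fin: "finite W"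
    and noE: "\<forall>w\<in>W. (v, w) \<notin> E \<and> (w, v) \<notin> E"
  shows "\<exists>xl xh yl yh fl fh. finv (insert v W) E xl xh yl yh fl fh"
proof -
  have I1: "xl a \<le> xh a \<and> yl a \<le> yh a \<and> fl a < fh a \<and> yl a \<le> fl a \<and> fh a \<le> yh a" if "a \<in> W" for a
    using inv that unfolding finv_def by blast
  have I2: "(a, b) \<in> E \<longleftrightarrow> (xl a \<le> xh b \<and> xl b \<le> xh a \<and> yl a \<le> yh b \<and> yl b \<le> yh a)"
    if "a \<in> W" "b \<in> W" "a \<noteq> b" for a b
    using inv that unfolding finv_def by blast
  have I3: "\<not> (xh a \<le> xh b \<and> yl b \<le> fh a \<and> fl a \<le> yh b)" if "a \<in> W" "b \<in> W" "a \<noteq> b" for a b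
    using inv that unfolding finv_def by blast
  have I4: "fh a < fl b \<or> fh b < fl a" if "a \<in> W" "b \<in> W" "a \<noteq> b" for a b
    using inv that unfolding finv_def by blast
  define M where "M = Max (insert 0 (yh ` W)) + 1"
  have MW: "yh w < M" if "w \<in> W" for w
  proof -
    have "yh w \<le> Max (insert 0 (yh ` W))" using fin that by (intro Max_ge) auto
    then show ?thesis unfolding M_def by simp
  qed
  define xl' where "xl' = xl(v := 0)"
  define xh' where "xh' = xh(v := 0)"
  define yl' where "yl' = yl(v := M)"
  define yh' where "yh' = yh(v := M + 1)"
  define fl' where "fl' = fl(v := M)"
  define fh' where "fh' = fh(v := M + 1)"
  have new_v: "xl' v = 0" "xh' v = 0" "yl' v = M" "yh' v = M + 1" "fl' v = M" "fh' v = M + 1"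
    unfolding xl'_def xh'_def yl'_def yh'_def fl'_def fh'_def by auto
  have new_w: "xl' w = xl w" "xh' w = xh w" "yl' w = yl w" "yh' w = yh w" "fl' w = fl w" "fh' w = fh w"
    if "w \<noteq> v" for w
    unfolding xl'_def xh'_def yl'_def yh'_def fl'_def fh'_def using that by auto
  have C1: "\<forall>a\<in>insert v W. xl' a \<le> xh' a \<and> yl' a \<le> yh' a \<and> fl' a < fh' a \<and> yl' a \<le> fl' a \<and> fh' a \<le> yh' a"
  proof
    fix a assume a: "a \<in> insert v W"
    show "xl' a \<le> xh' a \<and> yl' a \<le> yh' a \<and> fl' a < fh' a \<and> yl' a \<le> fl' a \<and> fh' a \<le> yh' a"
    proof (cases "a = v")
      case True then show ?thesis using new_v by simp
    next
      case False then show ?thesis using a I1[of a] new_w[of a] by auto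
    qed
  qed
  have C234: "((a, b) \<in> E \<longleftrightarrow> (xl' a \<le> xh' b \<and> xl' b \<le> xh' a \<and> yl' a \<le> yh' b \<and> yl' b \<le> yh' a))
     \<and> \<not> (xh' a \<le> xh' b \<and> yl' b \<le> fh' a \<and> fl' a \<le> yh' b) \<and> (fh' a < fl' b \<or> fh' b < fl' a)"
    if a: "a \<in> insert v W" and b: "b \<in> insert v W" and ab: "a \<noteq> b" for a b
  proof -
    consider "a = v" "b \<in> W" "b \<noteq> v" | "b = v" "a \<in> W" "a \<noteq> v" | "a \<in> W" "b \<in> W" "a \<noteq> v" "b \<noteq> v"
      using a b ab v by blast
    then show ?thesis
    proof cases
      case 1
      then show ?thesis using noE MW[of b] I1[of b] new_v new_w[of b] by auto
    next
      case 2
      then show ?thesis using noE MW[of a] I1[of a] new_v new_w[of a] by auto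
    next
      case 3
      then show ?thesis using ab I2[of a b] I3[of a b] I4[of a b] new_w[of a] new_w[of b] by auto
    qed
  qed
  have "finv (insert v W) E xl' xh' yl' yh' fl' fh'"
    unfolding finv_def using C1 C234 by blast
  then show ?thesis by blast
qed

lemma cycle_induced:
  assumes "is_cycle W E cs"
  shows "is_cycle W (induced_edges E W) cs"
proof -
  have "cs ! i \<in> W" if "i < length cs" for i using assms that unfolding is_cycle_def by auto
  moreover have "(i + 1) mod length cs < length cs" if "i < length cs" for i
  proof -
    have "0 < length cs" using that by linarith
    then show ?thesis by (rule mod_less_divisor)
  qed
  ultimately show ?thesis using assms unfolding is_cycle_def induced_edges_def by auto
qed

lemma cycle_mono:
  assumes "is_cycle (W - {x}) (induced_edges E (W - {x})) cs"
  shows "is_cycle W (induced_edges E W) cs"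
  using assms unfolding is_cycle_def induced_edges_def by auto

lemma forest_finv:
  assumes fin: "finite W" and sym: "sym E" and irr: "irrefl E"
  shows "forest W (induced_edges E W) \<Longrightarrow> \<exists>xl xh yl yh fl fh. finv W E xl xh yl yh fl fh"
  using fin
proof (induction W rule: finite_remove_induct)
  case empty
  then show ?case unfolding finv_def by auto
next
  case (remove A)
  have nocyc: "\<not> (\<exists>cs. is_cycle A E cs)"
    using remove.prems cycle_induced unfolding forest_def by blast
  obtain v where vA: "v \<in> A" and leaf: "\<forall>a\<in>A. \<forall>b\<in>A. (v, a) \<in> E \<longrightarrow> (v, b) \<in> E \<longrightarrow> a = b"
    using leaf_exists[OF remove.hyps(1) remove.hyps(2) sym irr nocyc] by blast
  have "forest (A - {v}) (induced_edges E (A - {v}))"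
    using remove.prems cycle_mono[of A v E] unfolding forest_def by blast
  then obtain xl xh yl yh fl fh where inv: "finv (A - {v}) E xl xh yl yh fl fh"
    using remove.IH[OF vA] by blast
  have ins: "insert v (A - {v}) = A" using vA by auto
  have symE: "(x, y) \<in> E \<longleftrightarrow> (y, x) \<in> E" for x y using sym unfolding sym_def by blast
  show ?case
  proof (cases "\<exists>u\<in>A - {v}. (v, u) \<in> E")
    case True
    then obtain u where u: "u \<in> A - {v}" "(v, u) \<in> E" by blast
    have "\<forall>w\<in>A - {v}. (v, w) \<in> E \<longrightarrow> w = u" using leaf u by blast
    then show ?thesis using finv_leaf[OF inv _ u] sym ins by auto
  next
    case False
    then have "\<forall>w\<in>A - {v}. (v, w) \<notin> E \<and> (w, v) \<notin> E" using symE by blast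
    moreover have "v \<notin> A - {v}" "finite (A - {v})" using remove.hyps(1) by auto
    ultimately show ?thesis using finv_iso[OF inv] ins by metis
  qed
qed

lemma finv_rep:
  assumes "finv W E xl xh yl yh fl fh"
  shows "box_representation W E 2 (\<lambda>w i. if i = 0 then (xl w, xh w) else (yl w, yh w))"
proof -
  have two: "(\<forall>i<(2::nat). P i) \<longleftrightarrow> P 0 \<and> P 1" for P by (auto simp: less_2_cases_iff)
  show ?thesis unfolding rep_iff ov_def two using assms unfolding finv_def by auto
qed

theorem theorem18:
  fixes V :: "'a set" and E :: "('a \<times> 'a) set"
  assumes "graph V E"
  shows "boxicity V E \<le> MFVC V E + 3"
proof -
  have fin: "finite V" and sym: "sym E" and irr: "irrefl E" using assms unfolding graph_def by auto
  have "feedback_vertex_cover V E V"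
    unfolding feedback_vertex_cover_def forest_def is_cycle_def by auto
  then have "\<exists>k. \<exists>S. feedback_vertex_cover V E S \<and> card S = k" by blast
  then have "\<exists>S. feedback_vertex_cover V E S \<and> card S = (LEAST k. \<exists>S. feedback_vertex_cover V E S \<and> card S = k)"
    by (rule LeastI_ex)
  then obtain S where S: "feedback_vertex_cover V E S" "card S = MFVC V E"
    unfolding MFVC_def by blast
  have SV: "S \<subseteq> V" and fo: "forest (V - S) (induced_edges E (V - S))"
    using S(1) unfolding feedback_vertex_cover_def by auto
  have finS: "finite S" using SV fin finite_subset by auto
  obtain xl xh yl yh fl fh where "finv (V - S) E xl xh yl yh fl fh"
    using forest_finv[OF _ sym irr fo] fin by blast
  then have "box_representation (V - S) E 2 (\<lambda>w i. if i = 0 then (xl w, xh w) else (yl w, yh w))"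
    by (rule finv_rep)
  then obtain B where "box_representation V E (2 + card S) B"
    using add_set[OF finS sym fin SV] by blast
  then have "Ex (box_representation V E (2 + card S))" by blast
  then have "boxicity V E \<le> 2 + card S" unfolding boxicity_def by (rule Least_le)
  then show ?thesis using S(2) by simp
qed

end
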